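(* Let $X$ be a $T_1$ topological space. An ideal $I$ of $T''(X)$ is a $z$-ideal if and only if for all $f\in T''(X)$ and $g\in I$ with $Z(f)\supseteq Z(g)$ we have $f\in I$.
   Context: $C(X)$ is the ring of real-valued continuous functions on $X$; a cozero set is a set $\{x: h(x)\neq 0\}$ with $h\in C(X)$. $T''(X)$ is the ring (under pointwise operations) of all functions $f\colon X\to\mathbb{R}$ for which there is a dense cozero set $U$ of $X$ with $f|_U$ continuous. $Z(f)=\{x\in X: f(x)=0\}$. In a commutative ring $R$ with unity, $M(a)$ is the intersection of all maximal ideals containing $a$, and an ideal $I$ is a $z$-ideal if $M(a)\subseteq I$ for all $a\in I$. *)

theory Defs
  imports "HOL-Analysis.Analysis" "HOL-Algebra.Ideal"
begin

definition cozero_set :: "('a::topological_space) set \<Rightarrow> bool" where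
  "cozero_set U \<longleftrightarrow> (\<exists>h::'a \<Rightarrow> real. continuous_on UNIV h \<and> U = {x. h x \<noteq> 0})"

definition Tpp :: "(('a::topological_space) \<Rightarrow> real) set" where
  "Tpp = {f. \<exists>U. cozero_set U \<and> closure U = UNIV \<and> continuous_on U f}"

definition Tpp_ring :: "(('a::topological_space) \<Rightarrow> real) ring" where
  "Tpp_ring = \<lparr>carrier = Tpp, monoid.mult = (\<lambda>f g x. f x * g x), one = (\<lambda>_. 1),
               zero = (\<lambda>_. 0), add = (\<lambda>f g x. f x + g x)\<rparr>"

definition zset :: "('a \<Rightarrow> real) \<Rightarrow> 'a set" where
  "zset f = {x. f x = 0}"

definition Mset :: "('b, 'm) ring_scheme \<Rightarrow> 'b \<Rightarrow> 'b set" where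
  "Mset R a = carrier R \<inter> \<Inter>{P. maximalideal P R \<and> a \<in> P}"

definition z_ideal :: "('b, 'm) ring_scheme \<Rightarrow> 'b set \<Rightarrow> bool" where
  "z_ideal R I \<longleftrightarrow> ideal I R \<and> (\<forall>a\<in>I. Mset R a \<subseteq> I)"

end

theory Submission
  imports Defs
begin

lemma cozero_open: "cozero_set U \<Longrightarrow> open U"
proof -
  assume "cozero_set U"
  then obtain h :: "_ \<Rightarrow> real" where h: "continuous_on UNIV h" "U = {x. h x \<noteq> 0}"
    unfolding cozero_set_def by blast
  have "open {x. h x \<noteq> 0}"
    using h(1) by (intro open_Collect_neq) (auto simp: continuous_on_eq_continuous_at)
  thus ?thesis using h(2) by simp
qed

lemma cozero_Int: "cozero_set U \<Longrightarrow> cozero_set V \<Longrightarrow> cozero_set (U \<inter> V)"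
proof -
  assume "cozero_set U" "cozero_set V"
  then obtain h k :: "_ \<Rightarrow> real" where h: "continuous_on UNIV h" "U = {x. h x \<noteq> 0}"
    and k: "continuous_on UNIV k" "V = {x. k x \<noteq> 0}"
    unfolding cozero_set_def by blast
  have "continuous_on UNIV (\<lambda>x. h x * k x)" using h k by (intro continuous_intros)
  moreover have "U \<inter> V = {x. h x * k x \<noteq> 0}" using h k by auto
  ultimately show ?thesis unfolding cozero_set_def by blast
qed

lemma dense_Int: "open U \<Longrightarrow> closure U = UNIV \<Longrightarrow> closure V = UNIV \<Longrightarrow> closure (U \<inter> V) = UNIV"
proof -
  assume "open U" "closure U = UNIV" "closure V = UNIV"
  hence "U \<subseteq> closure (U \<inter> V)" using open_Int_closure_subset[of U V] by simp
  hence "closure U \<subseteq> closure (U \<inter> V)" by (metis closure_closure closure_mono)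
  thus ?thesis using \<open>closure U = UNIV\<close> by auto
qed

lemma Tpp_binop:
  assumes "f \<in> Tpp" "g \<in> Tpp"
    and "\<And>U. continuous_on U f \<Longrightarrow> continuous_on U g \<Longrightarrow> continuous_on U (\<lambda>x. op (f x) (g x))"
  shows "(\<lambda>x. op (f x) (g x)) \<in> Tpp"
proof -
  obtain U where U: "cozero_set U" "closure U = UNIV" "continuous_on U f" using assms(1) unfolding Tpp_def by blast
  obtain V where V: "cozero_set V" "closure V = UNIV" "continuous_on V g" using assms(2) unfolding Tpp_def by blast
  have "cozero_set (U \<inter> V)" by (rule cozero_Int[OF U(1) V(1)])
  moreover have "closure (U \<inter> V) = UNIV" using dense_Int[OF cozero_open[OF U(1)] U(2) V(2)] .
  moreover have "continuous_on (U \<inter> V) (\<lambda>x. op (f x) (g x))"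
    by (rule assms(3)[OF continuous_on_subset[OF U(3)] continuous_on_subset[OF V(3)]]) auto
  ultimately show ?thesis unfolding Tpp_def by blast
qed

lemma Tpp_add: "f \<in> Tpp \<Longrightarrow> g \<in> Tpp \<Longrightarrow> (\<lambda>x. f x + g x) \<in> Tpp"
  by (rule Tpp_binop[of f g "(+)"], assumption+, rule continuous_on_add)

lemma Tpp_mult: "f \<in> Tpp \<Longrightarrow> g \<in> Tpp \<Longrightarrow> (\<lambda>x. f x * g x) \<in> Tpp"
  by (rule Tpp_binop[of f g "(*)"], assumption+, rule continuous_on_mult)

lemma Tpp_const: "(\<lambda>_. c) \<in> Tpp"
proof -
  have "cozero_set (UNIV :: 'a set)" unfolding cozero_set_def
    by (rule exI[of _ "\<lambda>_. 1"]) auto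
  thus ?thesis unfolding Tpp_def by (auto intro: continuous_intros)
qed

lemma Tpp_uminus: "f \<in> Tpp \<Longrightarrow> (\<lambda>x. - f x) \<in> Tpp"
  using Tpp_mult[OF Tpp_const[of "-1"], of f] by simp

lemma Tpp_inverse:
  assumes "f \<in> Tpp" "\<And>x. f x \<noteq> 0"
  shows "(\<lambda>x. 1 / f x) \<in> Tpp"
proof -
  obtain U where U: "cozero_set U" "closure U = UNIV" "continuous_on U f" using assms(1) unfolding Tpp_def by blast
  have "continuous_on U (\<lambda>x. 1 / f x)" using U(3) assms(2) by (intro continuous_intros) auto
  thus ?thesis using U unfolding Tpp_def by blast
qed

lemma Tpp_carrier[simp]: "carrier Tpp_ring = Tpp"
  and Tpp_ops[simp]: "x \<oplus>\<^bsub>Tpp_ring\<^esub> y = (\<lambda>t. x t + y t)" "x \<otimes>\<^bsub>Tpp_ring\<^esub> y = (\<lambda>t. x t * y t)"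
    "\<one>\<^bsub>Tpp_ring\<^esub> = (\<lambda>_. 1)" "\<zero>\<^bsub>Tpp_ring\<^esub> = (\<lambda>_. 0)"
  by (simp_all add: Tpp_ring_def)

lemma Tpp_cring: "cring (Tpp_ring :: ('a::topological_space \<Rightarrow> real) ring)"
proof (rule cringI)
  show "abelian_group (Tpp_ring :: ('a \<Rightarrow> real) ring)"
    by (rule abelian_groupI)
      (auto simp: Tpp_add Tpp_const algebra_simps intro!: bexI[OF _ Tpp_uminus])
  show "comm_monoid (Tpp_ring :: ('a \<Rightarrow> real) ring)"
    by (rule comm_monoidI) (auto simp: Tpp_mult Tpp_const algebra_simps)
  show "\<And>x y z. x \<in> carrier Tpp_ring \<Longrightarrow> y \<in> carrier Tpp_ring \<Longrightarrow> z \<in> carrier Tpp_ring \<Longrightarrow>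
      (x \<oplus>\<^bsub>Tpp_ring\<^esub> y) \<otimes>\<^bsub>Tpp_ring\<^esub> z = x \<otimes>\<^bsub>Tpp_ring\<^esub> z \<oplus>\<^bsub>Tpp_ring\<^esub> y \<otimes>\<^bsub>Tpp_ring\<^esub> z"
    by (auto simp: algebra_simps)
qed

lemma Tpp_a_inv: "f \<in> Tpp \<Longrightarrow> \<ominus>\<^bsub>(Tpp_ring :: ('a::topological_space \<Rightarrow> real) ring)\<^esub> f = (\<lambda>x. - f x)"
proof -
  assume f: "f \<in> Tpp"
  interpret cring "Tpp_ring :: ('a \<Rightarrow> real) ring" by (rule Tpp_cring)
  show ?thesis by (rule minus_equality) (auto simp: f Tpp_uminus)
qed

lemma point_maximal:
  "maximalideal {f \<in> Tpp. f x = 0} (Tpp_ring :: ('a::topological_space \<Rightarrow> real) ring)"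
proof -
  interpret cring "Tpp_ring :: ('a \<Rightarrow> real) ring" by (rule Tpp_cring)
  let ?P = "{f \<in> (Tpp :: ('a \<Rightarrow> real) set). f x = 0}"
  have id: "ideal ?P Tpp_ring"
  proof (rule idealI[OF ring_axioms])
    show "subgroup ?P (add_monoid Tpp_ring)"
    proof (rule subgroup.intro)
      show "?P \<subseteq> carrier (add_monoid Tpp_ring)" by auto
      show "\<And>a b. a \<in> ?P \<Longrightarrow> b \<in> ?P \<Longrightarrow> a \<otimes>\<^bsub>add_monoid Tpp_ring\<^esub> b \<in> ?P"
        by (auto simp: Tpp_add)
      show "\<one>\<^bsub>add_monoid Tpp_ring\<^esub> \<in> ?P" by (auto simp: Tpp_const)
      show "\<And>a. a \<in> ?P \<Longrightarrow> inv\<^bsub>add_monoid Tpp_ring\<^esub> a \<in> ?P"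
        using Tpp_a_inv Tpp_uminus unfolding a_inv_def by fastforce
    qed
  qed (auto simp: Tpp_mult)
  show ?thesis
  proof (rule maximalidealI[OF id])
    show "carrier Tpp_ring \<noteq> ?P" using Tpp_const[of 1] by auto
    fix J assume J: "ideal J Tpp_ring" "?P \<subseteq> J" "J \<subseteq> carrier Tpp_ring"
    interpret J: ideal J Tpp_ring by fact
    show "J = ?P \<or> J = carrier Tpp_ring"
    proof (cases "J \<subseteq> ?P")
      case True thus ?thesis using J by blast
    next
      case False
      then obtain h where h: "h \<in> J" "h x \<noteq> 0" using J by auto
      have hT: "h \<in> Tpp" using h J by auto
      define c where "c = 1 / h x"
      have "(\<lambda>_. c) \<otimes>\<^bsub>Tpp_ring\<^esub> h \<in> J" by (rule J.I_l_closed[OF h(1)]) (simp add: Tpp_const)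
      moreover have "(\<lambda>t. 1 - c * h t) \<in> J"
      proof -
        have "(\<lambda>t. 1 - c * h t) \<in> Tpp"
          using Tpp_add[OF Tpp_const[of 1] Tpp_mult[OF Tpp_const[of "-c"] hT]] by simp
        moreover have "1 - c * h x = 0" using h(2) by (simp add: c_def)
        ultimately show ?thesis using J(2) by auto
      qed
      ultimately have "(\<lambda>_. c) \<otimes>\<^bsub>Tpp_ring\<^esub> h \<oplus>\<^bsub>Tpp_ring\<^esub> (\<lambda>t. 1 - c * h t) \<in> J"
        by (rule J.a_closed)
      hence "\<one>\<^bsub>Tpp_ring\<^esub> \<in> J" by simp
      thus ?thesis using J.one_imp_carrier by blast
    qed
  qed
qed

theorem corollary5p2:
  fixes I :: "('a::t1_space \<Rightarrow> real) set"
  assumes "ideal I (Tpp_ring :: ('a \<Rightarrow> real) ring)"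
  shows "z_ideal (Tpp_ring :: ('a \<Rightarrow> real) ring) I \<longleftrightarrow>
         (\<forall>f\<in>(Tpp :: ('a \<Rightarrow> real) set). \<forall>g\<in>I. zset g \<subseteq> zset f \<longrightarrow> f \<in> I)"
proof
  interpret cring "Tpp_ring :: ('a \<Rightarrow> real) ring" by (rule Tpp_cring)
  interpret I: ideal I "Tpp_ring :: ('a \<Rightarrow> real) ring" by fact
  assume z: "z_ideal (Tpp_ring :: ('a \<Rightarrow> real) ring) I"
  show "\<forall>f\<in>(Tpp :: ('a \<Rightarrow> real) set). \<forall>g\<in>I. zset g \<subseteq> zset f \<longrightarrow> f \<in> I"
  proof (intro ballI impI)
    fix f g assume f: "f \<in> (Tpp :: ('a \<Rightarrow> real) set)" and g: "g \<in> I" and Z: "zset g \<subseteq> zset f"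
    have gT: "g \<in> Tpp" using g I.a_subset by auto
    have "f \<in> Mset (Tpp_ring :: ('a \<Rightarrow> real) ring) g"
      unfolding Mset_def
    proof (intro IntI InterI, simp add: f)
      fix M assume "M \<in> {P. maximalideal P (Tpp_ring :: ('a \<Rightarrow> real) ring) \<and> g \<in> P}"
      hence M: "maximalideal M (Tpp_ring :: ('a \<Rightarrow> real) ring)" "g \<in> M" by auto
      interpret M: maximalideal M "Tpp_ring :: ('a \<Rightarrow> real) ring" by fact
      show "f \<in> M"
      proof (rule ccontr)
        assume fM: "f \<notin> M"
        let ?J = "M <+>\<^bsub>Tpp_ring\<^esub> PIdl\<^bsub>Tpp_ring\<^esub> f"
        have Jid: "ideal ?J Tpp_ring"
          by (rule add_ideals[OF M.is_ideal cgenideal_ideal]) (simp add: f)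
        have MJ: "M \<subseteq> ?J"
        proof
          fix m assume "m \<in> M"
          moreover have "(\<lambda>_. 0) \<in> PIdl\<^bsub>Tpp_ring\<^esub> f"
            unfolding cgenideal_def by (auto intro!: exI[of _ "\<lambda>_. 0"] simp: Tpp_const)
          ultimately have "m \<oplus>\<^bsub>Tpp_ring\<^esub> (\<lambda>_. 0) \<in> ?J" unfolding set_add_def' by blast
          thus "m \<in> ?J" by simp
        qed
        have fJ: "f \<in> ?J"
        proof -
          have p: "\<one>\<^bsub>Tpp_ring\<^esub> \<otimes>\<^bsub>Tpp_ring\<^esub> f \<in> PIdl\<^bsub>Tpp_ring\<^esub> f"
            unfolding cgenideal_def by (rule CollectI, rule exI, rule conjI[OF refl]) (simp add: Tpp_const)
          have "\<zero>\<^bsub>Tpp_ring\<^esub> \<oplus>\<^bsub>Tpp_ring\<^esub> (\<one>\<^bsub>Tpp_ring\<^esub> \<otimes>\<^bsub>Tpp_ring\<^esub> f) \<in> ?J"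
            unfolding set_add_def' using M.zero_closed p by blast
          thus ?thesis by simp
        qed
        have "?J \<subseteq> carrier Tpp_ring" by (rule additive_subgroup.a_subset[OF ideal.axioms(1)[OF Jid]])
        hence "?J = carrier Tpp_ring" using M.I_maximal[OF Jid MJ] fJ fM by auto
        hence "(\<lambda>_. 1) \<in> ?J" using Tpp_const by auto
        then obtain m r where m: "m \<in> M" and r: "r \<in> Tpp" and eq: "(\<lambda>_. 1) = (\<lambda>t. m t + r t * f t)"
          unfolding set_add_def' cgenideal_def by auto
        have mT: "m \<in> Tpp" using m M.a_subset by auto
        let ?u = "(m \<otimes>\<^bsub>Tpp_ring\<^esub> m) \<oplus>\<^bsub>Tpp_ring\<^esub> (g \<otimes>\<^bsub>Tpp_ring\<^esub> g)"
        have uM: "?u \<in> M"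
          using m M.I_r_closed M.a_closed M(2) mT gT by auto
        have nz: "m t * m t + g t * g t \<noteq> 0" for t
        proof (cases "g t = 0")
          case True
          hence "f t = 0" using Z unfolding zset_def by auto
          hence "m t = 1" using fun_cong[OF eq, of t] by simp
          thus ?thesis using True by simp
        next
          case False
          hence "g t * g t > 0" using linorder_neq_iff by (auto simp add: zero_less_mult_iff)
          moreover have "m t * m t \<ge> 0" by simp
          ultimately show ?thesis by linarith
        qed
        have vT: "(\<lambda>t. 1 / (m t * m t + g t * g t)) \<in> Tpp"
          by (rule Tpp_inverse[OF Tpp_add[OF Tpp_mult[OF mT mT] Tpp_mult[OF gT gT]] nz])
        have "(\<lambda>t. 1 / (m t * m t + g t * g t)) \<otimes>\<^bsub>Tpp_ring\<^esub> ?u \<in> M"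
          by (rule M.I_l_closed[OF uM]) (simp add: vT)
        moreover have "(\<lambda>t. 1 / (m t * m t + g t * g t)) \<otimes>\<^bsub>Tpp_ring\<^esub> ?u = \<one>\<^bsub>Tpp_ring\<^esub>"
          using nz by (auto intro!: ext)
        ultimately have "M = carrier Tpp_ring" using M.one_imp_carrier by simp
        thus False using M.I_notcarr by simp
      qed
    qed
    thus "f \<in> I" using z g unfolding z_ideal_def by blast
  qed
next
  assume H: "\<forall>f\<in>(Tpp :: ('a \<Rightarrow> real) set). \<forall>g\<in>I. zset g \<subseteq> zset f \<longrightarrow> f \<in> I"
  show "z_ideal (Tpp_ring :: ('a \<Rightarrow> real) ring) I"
    unfolding z_ideal_def
  proof (intro conjI ballI subsetI)
    show "ideal I Tpp_ring" by fact
    fix a h assume a: "a \<in> I" and h: "h \<in> Mset (Tpp_ring :: ('a \<Rightarrow> real) ring) a"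
    have hT: "h \<in> Tpp" using h unfolding Mset_def by auto
    have "zset a \<subseteq> zset h"
    proof
      fix x assume x: "x \<in> zset a"
      have "a \<in> Tpp" using a additive_subgroup.a_subset[OF ideal.axioms(1)[OF assms]] by auto
      hence "maximalideal {f \<in> Tpp. f x = 0} (Tpp_ring :: ('a \<Rightarrow> real) ring) \<and> a \<in> {f \<in> Tpp. f x = 0}"
        using x point_maximal unfolding zset_def by auto
      hence "h \<in> {f \<in> Tpp. f x = 0}" using h unfolding Mset_def by blast
      thus "x \<in> zset h" unfolding zset_def by simp
    qed
    thus "h \<in> I" using H hT a by blast
  qed
qed

end
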